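(* Let $n$, $k$, $t$ be positive integers with $k\geq t+1$ and $n\geq 2k$, and let $V$ be an $n$-dimensional vector space over $\mathbb{F}_q$. Suppose $\mathcal{F}\subseteq{V\brack k}$ is an almost $t$-intersecting family with $\tau_t(\mathcal{F})<k$ which has a unique $t$-cover $T$ of dimension $\tau_t(\mathcal{F})$. If $A$ is a subspace of $V$ with $\dim(A)<\tau_t(\mathcal{F})$ and $\dim(A\cap T)\geq t$, then $$|(\mathcal{F}\setminus\mathcal{F}_T)_A|\leq{k-t+1\brack 1}^{\tau_t(\mathcal{F})-\dim(A)+1}{n-\tau_t(\mathcal{F})-1\brack k-\tau_t(\mathcal{F})-1}+\sum_{i=0}^{\tau_t(\mathcal{F})-\dim(A)}{k-t+1\brack 1}^{i}.$$
   Context: $q$ is a prime power; ${W\brack k}$ is the set of $k$-dimensional subspaces of $W$ and ${m\brack r}$ the Gaussian binomial coefficient $\prod_{i=0}^{r-1}\frac{q^{m-i}-1}{q^{r-i}-1}$ (equal to $1$ for $r=0$). A family $\mathcal{F}\subseteq{V\brack k}$ is almost $t$-intersecting if for each $F\in\mathcal{F}$ there is at most one $F'\in\mathcal{F}$ with $\dim(F\cap F')<t$. A subspace $W$ is a $t$-cover of $\mathcal{F}$ if $\dim(W\cap F)\geq t$ for all $F\in\mathcal{F}$; $\tau_t(\mathcal{F})$ is the minimum dimension of a $t$-cover of $\mathcal{F}$. For a family $\mathcal{B}$ and subspace $A$, $\mathcal{B}_A=\{F\in\mathcal{B}: A\subseteq F\}$. *)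

theory Defs
  imports "HOL-Analysis.Analysis"
begin

text \<open>The ambient space V is the coordinate space ('a ^ 'n) over a finite field 'a,
  so q = CARD('a) and n = CARD('n).\<close>

definition gauss_binom :: "nat \<Rightarrow> nat \<Rightarrow> nat \<Rightarrow> real" where
  "gauss_binom q m r = (\<Prod>i<r. (real q ^ (m - i) - 1) / (real q ^ (r - i) - 1))"

definition subspaces_of_dim :: "nat \<Rightarrow> ('a::field ^ 'n) set set" where
  "subspaces_of_dim k = {W. vec.subspace W \<and> vec.dim W = k}"

definition almost_t_intersecting :: "nat \<Rightarrow> ('a::field ^ 'n) set set \<Rightarrow> bool" where
  "almost_t_intersecting t \<F> \<longleftrightarrow>
     (\<forall>F\<in>\<F>. card {F'\<in>\<F>. vec.dim (F \<inter> F') < t} \<le> 1)"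

definition t_cover :: "nat \<Rightarrow> ('a::field ^ 'n) set set \<Rightarrow> ('a ^ 'n) set \<Rightarrow> bool" where
  "t_cover t \<F> W \<longleftrightarrow> vec.subspace W \<and> (\<forall>F\<in>\<F>. vec.dim (W \<inter> F) \<ge> t)"

definition tau :: "nat \<Rightarrow> ('a::field ^ 'n) set set \<Rightarrow> nat" where
  "tau t \<F> = (LEAST d. \<exists>W. t_cover t \<F> W \<and> vec.dim W = d)"

definition containing :: "('a ^ 'n) set set \<Rightarrow> ('a ^ 'n) set \<Rightarrow> ('a ^ 'n) set set" where
  "containing \<B> A = {F\<in>\<B>. A \<subseteq> F}"

end

theory Submission imports Defs begin

lemma card_span_indep:
  fixes B :: "('a::{field,finite}^'n) set"
  assumes "vec.independent B"
  shows "card (vec.span B) = CARD('a) ^ card B"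
proof -
  have "finite B" by simp
  then show ?thesis using assms
  proof (induction B rule: finite_induct)
    case empty
    then show ?case by simp
  next
    case (insert x B)
    have iB: "vec.independent B" and xB: "x \<notin> vec.span B"
      using insert.prems insert.hyps by (auto simp: vec.independent_insert)
    have inj: "inj_on (\<lambda>(c,v). c *s x + v) (UNIV \<times> vec.span B)"
    proof (rule inj_onI, clarsimp)
      fix c v c' v'
      assume v: "v \<in> vec.span B" and v': "v' \<in> vec.span B" and eq: "c *s x + v = c' *s x + v'"
      have "(c - c') *s x = v' - v" using eq by (simp add: vec.scale_left_diff_distrib algebra_simps)
      hence "(c - c') *s x \<in> vec.span B" using v v' vec.span_diff by metis
      have "c = c'"
      proof (rule ccontr)
        assume "c \<noteq> c'"
        hence "x = inverse (c - c') *s ((c - c') *s x)" by (simp only: vec.scale_scale, simp)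
        hence "x \<in> vec.span B" using \<open>(c - c') *s x \<in> vec.span B\<close> vec.span_scale by metis
        with xB show False by simp
      qed
      then show "c = c' \<and> v = v'" using eq by simp
    qed
    have img: "(\<lambda>(c,v). c *s x + v) ` (UNIV \<times> vec.span B) = vec.span (insert x B)"
    proof
      show "(\<lambda>(c,v). c *s x + v) ` (UNIV \<times> vec.span B) \<subseteq> vec.span (insert x B)"
      proof (clarsimp simp: vec.span_insert)
        fix a b assume "b \<in> vec.span B"
        then show "\<exists>k. a *s x + b - k *s x \<in> vec.span B" by (intro exI[of _ a]) simp
      qed
      show "vec.span (insert x B) \<subseteq> (\<lambda>(c,v). c *s x + v) ` (UNIV \<times> vec.span B)"
      proof
        fix y assume "y \<in> vec.span (insert x B)"
        then obtain c where c: "y - c *s x \<in> vec.span B" by (auto simp: vec.span_insert)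
        then show "y \<in> (\<lambda>(c,v). c *s x + v) ` (UNIV \<times> vec.span B)"
          by (intro image_eqI[of _ _ "(c, y - c *s x)"]) auto
      qed
    qed
    have "card (vec.span (insert x B)) = card ((UNIV::'a set) \<times> vec.span B)"
      using card_image[OF inj] unfolding img .
    also have "\<dots> = CARD('a) * CARD('a) ^ card B" using insert.IH[OF iB] by (simp add: card_cartesian_product)
    finally show ?case using insert.hyps by simp
  qed
qed


lemma card_subspace:
  fixes S :: "('a::{field,finite}^'n) set"
  assumes "vec.subspace S"
  shows "card S = CARD('a) ^ vec.dim S"
proof -
  obtain B where B: "B \<subseteq> S" "vec.independent B" "S \<subseteq> vec.span B" "card B = vec.dim S"
    using vec.basis_exists by blast
  have "vec.span B = S" using vec.span_subspace[OF B(1) B(3) assms] .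
  then show ?thesis using card_span_indep[OF B(2)] B(4) by simp
qed

lemma card_ge2: "CARD('a::{field,finite}) \<ge> 2"
proof -
  have "card {0::'a, 1} \<le> CARD('a)" by (rule card_mono) auto
  then show ?thesis by simp
qed

lemma subspace_eq_dim:
  fixes S U :: "('a::{field,finite}^'n) set"
  assumes "vec.subspace S" "vec.subspace U" "S \<subseteq> U" "vec.dim U \<le> vec.dim S"
  shows "S = U"
proof -
  have "vec.dim S \<le> vec.dim U" using vec.dim_subset[OF assms(3)] .
  hence "card S = card U" using assms card_subspace by (metis le_antisym)
  then show ?thesis using card_subset_eq[OF _ assms(3)] by simp
qed

lemma dim_span_insert:
  fixes B :: "('a::{field,finite}^'n) set"
  assumes "vec.subspace B" "x \<notin> B"
  shows "vec.dim (vec.span (insert x B)) = vec.dim B + 1"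
  using assms by (simp add: vec.dim_insert vec.span_eq_iff[THEN iffD2])

lemma card_Diff_subspace:
  fixes S U :: "('a::{field,finite}^'n) set"
  assumes "vec.subspace S" "vec.subspace U" "S \<subseteq> U"
  shows "real (card (U - S)) = real CARD('a) ^ vec.dim U - real CARD('a) ^ vec.dim S"
proof -
  have "card (U - S) = card U - card S" by (rule card_Diff_subset) (use assms in auto)
  moreover have "card S \<le> card U" by (rule card_mono) (use assms in auto)
  ultimately show ?thesis using card_subspace[OF assms(1)] card_subspace[OF assms(2)] by (simp add: of_nat_diff)
qed

lemma double_count:
  fixes S :: "'b set set" and X :: "'b set"
  assumes "finite S" "finite X"
  shows "(\<Sum>G\<in>S. real (card (X \<inter> G))) = (\<Sum>x\<in>X. real (card {G\<in>S. x \<in> G}))"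
proof -
  have "(\<Sum>G\<in>S. real (card (X \<inter> G))) = (\<Sum>G\<in>S. \<Sum>x\<in>X. if x \<in> G then 1 else 0)"
  proof (rule sum.cong[OF refl])
    fix G
    have "X \<inter> G = {x\<in>X. x \<in> G}" by auto
    then show "real (card (X \<inter> G)) = (\<Sum>x\<in>X. if x \<in> G then 1 else 0)"
      using assms(2) by (simp add: sum.inter_filter[symmetric])
  qed
  also have "\<dots> = (\<Sum>x\<in>X. \<Sum>G\<in>S. if x \<in> G then 1 else 0)" by (rule sum.swap)
  also have "\<dots> = (\<Sum>x\<in>X. real (card {G\<in>S. x \<in> G}))"
    using assms(1) by (simp add: sum.inter_filter[symmetric])
  finally show ?thesis .
qed

lemma double_count_bound:
  fixes S :: "'b set set" and X :: "'b set"
  assumes "finite S" "finite X"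
    and "\<And>G. G \<in> S \<Longrightarrow> a \<le> real (card (X \<inter> G))"
    and "\<And>x. x \<in> X \<Longrightarrow> real (card {G\<in>S. x \<in> G}) \<le> b"
  shows "real (card S) * a \<le> real (card X) * b"
proof -
  have "real (card S) * a = (\<Sum>G\<in>S. a)" by simp
  also have "\<dots> \<le> (\<Sum>G\<in>S. real (card (X \<inter> G)))" by (rule sum_mono) (rule assms(3))
  also have "\<dots> = (\<Sum>x\<in>X. real (card {G\<in>S. x \<in> G}))" by (rule double_count[OF assms(1,2)])
  also have "\<dots> \<le> (\<Sum>x\<in>X. b)" by (rule sum_mono) (rule assms(4))
  also have "\<dots> = real (card X) * b" by simp
  finally show ?thesis .
qed

lemma gauss_nonneg: "q \<ge> 1 \<Longrightarrow> gauss_binom q m r \<ge> 0"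
  unfolding gauss_binom_def
  by (intro prod_nonneg divide_nonneg_nonneg) (auto simp: one_le_power)

lemma gauss_Suc: "gauss_binom q m (Suc r) =
   (real q ^ m - 1) / (real q ^ Suc r - 1) * gauss_binom q (m - 1) r"
  unfolding gauss_binom_def by (subst prod.lessThan_Suc_shift) (simp add: diff_diff_add)


lemma count_containing:
  fixes B :: "('a::{field,finite}^'n) set"
  assumes "vec.subspace B" "vec.dim B + r = k"
  shows "real (card {G. vec.subspace G \<and> vec.dim G = k \<and> B \<subseteq> G})
           \<le> gauss_binom CARD('a) (CARD('n) - vec.dim B) r"
  using assms
proof (induction r arbitrary: B)
  case 0
  have "{G. vec.subspace G \<and> vec.dim G = k \<and> B \<subseteq> G} \<subseteq> {B}"
    using 0 subspace_eq_dim by fastforce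
  hence "card {G. vec.subspace G \<and> vec.dim G = k \<and> B \<subseteq> G} \<le> 1"
    using card_mono[of "{B}"] by fastforce
  then show ?case by (simp add: gauss_binom_def)
next
  case (Suc r)
  define S where "S = {G. vec.subspace G \<and> vec.dim G = k \<and> B \<subseteq> G}"
  define Q where "Q = real CARD('a)"
  define b where "b = vec.dim B"
  define n where "n = CARD('n)"
  define g where "g = gauss_binom CARD('a) (n - (b + 1)) r"
  have Q2: "Q \<ge> 2" using card_ge2[where 'a='a] unfolding Q_def by linarith
  have bn: "b \<le> n" unfolding b_def n_def by (rule dim_subset_UNIV_cart_gen)
  have k: "k = b + Suc r" using Suc.prems b_def by simp
  have cnt: "real (card S) * (Q ^ k - Q ^ b) \<le> real (card (UNIV - B)) * g"
  proof (rule double_count_bound)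
    show "finite S" "finite (UNIV - B)" by auto
  next
    fix G assume "G \<in> S"
    hence G: "vec.subspace G" "vec.dim G = k" "B \<subseteq> G" unfolding S_def by auto
    have "(UNIV - B) \<inter> G = G - B" by auto
    then show "Q ^ k - Q ^ b \<le> real (card ((UNIV - B) \<inter> G))"
      using card_Diff_subspace[OF Suc.prems(1) G(1) G(3)] G(2) unfolding Q_def b_def by simp
  next
    fix x assume x: "x \<in> UNIV - B"
    define B' where "B' = vec.span (insert x B)"
    have sB': "vec.subspace B'" unfolding B'_def by simp
    have dB': "vec.dim B' = b + 1" unfolding B'_def b_def
      using dim_span_insert[OF Suc.prems(1)] x by simp
    have eq: "{G\<in>S. x \<in> G} = {G. vec.subspace G \<and> vec.dim G = k \<and> B' \<subseteq> G}"
    proof -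
      have "vec.subspace G \<Longrightarrow> (B \<subseteq> G \<and> x \<in> G) = (B' \<subseteq> G)" for G
        unfolding B'_def using vec.span_minimal[of "insert x B" G] vec.span_superset[of "insert x B"]
        by auto
      then show ?thesis unfolding S_def by auto
    qed
    have "vec.dim B' + r = k" using dB' k by simp
    from Suc.IH[OF sB' this] show "real (card {G\<in>S. x \<in> G}) \<le> g"
      unfolding eq g_def dB' n_def by simp
  qed
  have cU: "real (card (UNIV - B)) = Q ^ n - Q ^ b"
    using card_Diff_subspace[OF Suc.prems(1) vec.subspace_UNIV] unfolding Q_def b_def n_def
    by (simp add: vec_dim_card del: vec.dim_UNIV)
  have qk: "Q ^ k = Q ^ b * Q ^ Suc r" using k by (simp add: power_add)
  have qn: "Q ^ n = Q ^ b * Q ^ (n - b)" using bn by (simp add: power_add[symmetric])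
  have qb: "Q ^ b > 0" using Q2 by simp
  have qr: "Q ^ Suc r > 1" using Q2 by (intro one_less_power) auto
  have qnb: "Q ^ (n - b) \<ge> 1" using Q2 by (simp add: one_le_power)
  have "real (card S) * (Q ^ b * (Q ^ Suc r - 1)) \<le> Q ^ b * ((Q ^ (n - b) - 1) * g)"
    using cnt cU qk qn by (simp add: algebra_simps)
  hence "real (card S) * (Q ^ Suc r - 1) \<le> (Q ^ (n - b) - 1) * g"
    using qb by (simp add: mult.left_commute)
  hence "real (card S) \<le> (Q ^ (n - b) - 1) * g / (Q ^ Suc r - 1)"
    using qr by (simp add: pos_le_divide_eq)
  also have "\<dots> = gauss_binom CARD('a) (n - b) (Suc r)"
    unfolding gauss_Suc g_def Q_def by (simp add: diff_diff_add)
  finally show ?case unfolding S_def n_def b_def .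
qed

lemma key_ineq:
  fixes Q :: real
  assumes "Q \<ge> 2" "d < t" "t \<le> k"
  shows "(Q ^ k - Q ^ d) \<le> ((Q ^ (k - t + 1) - 1) / (Q - 1)) * (Q ^ t - Q ^ d)"
proof -
  define u where "u = Q ^ (k - t)"
  define v where "v = Q ^ (t - d - 1)"
  define w where "w = Q ^ d"
  have u1: "u \<ge> 1" "v \<ge> 1" "w \<ge> 0" using assms unfolding u_def v_def w_def by (auto simp: one_le_power)
  have e1: "Q ^ k = w * v * u * Q" unfolding u_def v_def w_def
    using assms by (simp add: power_add[symmetric] power_Suc2[symmetric] mult.assoc)
  have e2: "Q ^ t = w * v * Q" unfolding v_def w_def
    using assms by (simp add: power_add[symmetric] power_Suc2[symmetric])
  have e3: "Q ^ (k - t + 1) = u * Q" unfolding u_def by simp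
  have "(w * v * u * Q - w) * (Q - 1) \<le> (u * Q - 1) * (w * v * Q - w)"
  proof -
    have "(u * Q - 1) * (w * v * Q - w) - (w * v * u * Q - w) * (Q - 1) = w * Q * ((u - 1) * (v - 1))"
      by (simp add: algebra_simps)
    moreover have "w * Q * ((u - 1) * (v - 1)) \<ge> 0" using u1 assms by simp
    ultimately show ?thesis by linarith
  qed
  then have "(Q ^ k - Q ^ d) * (Q - 1) \<le> (Q ^ (k - t + 1) - 1) * (Q ^ t - Q ^ d)"
    unfolding e1 e2 e3 w_def .
  moreover have "Q - 1 > 0" using assms by simp
  ultimately show ?thesis by (simp add: pos_le_divide_eq field_simps)
qed


theorem lemma5p1:
  fixes \<F> :: "('a::{field,finite} ^ 'n) set set"
    and T A :: "('a ^ 'n) set"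
    and k t :: nat
  assumes "t \<ge> 1" and "k \<ge> t + 1" and "CARD('n) \<ge> 2 * k"
    and "\<F> \<subseteq> subspaces_of_dim k"
    and "almost_t_intersecting t \<F>"
    and "tau t \<F> < k"
    and "t_cover t \<F> T" and "vec.dim T = tau t \<F>"
    and "\<forall>W. t_cover t \<F> W \<and> vec.dim W = tau t \<F> \<longrightarrow> W = T"
    and "vec.subspace A" and "vec.dim A < tau t \<F>" and "vec.dim (A \<inter> T) \<ge> t"
  shows "real (card (containing (\<F> - containing \<F> T) A))
    \<le> gauss_binom CARD('a) (k - t + 1) 1 ^ (tau t \<F> - vec.dim A + 1)
        * gauss_binom CARD('a) (CARD('n) - tau t \<F> - 1) (k - tau t \<F> - 1)
      + (\<Sum>i=0..tau t \<F> - vec.dim A. gauss_binom CARD('a) (k - t + 1) 1 ^ i)"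
proof -
  define tt where "tt = tau t \<F>"
  define Q where "Q = real CARD('a)"
  define c where "c = gauss_binom CARD('a) (k - t + 1) 1"
  define N where "N = gauss_binom CARD('a) (CARD('n) - tt - 1) (k - tt - 1)"
  define H where "H = (\<lambda>A. containing (\<F> - containing \<F> T) A)"
  have Q2: "Q \<ge> 2" using card_ge2[where 'a='a] unfolding Q_def by linarith
  have c_eq: "c = (Q ^ (k - t + 1) - 1) / (Q - 1)" unfolding c_def gauss_binom_def Q_def by simp
  have c0: "c \<ge> 0" unfolding c_def by (rule gauss_nonneg) (use card_ge2[where 'a='a] in linarith)
  have N0: "N \<ge> 0" unfolding N_def by (rule gauss_nonneg) (use card_ge2[where 'a='a] in linarith)
  have Fsub: "\<And>G. G \<in> \<F> \<Longrightarrow> vec.subspace G \<and> vec.dim G = k"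
    using assms(4) unfolding subspaces_of_dim_def by auto
  have main: "\<forall>A. vec.subspace A \<and> vec.dim A + j = tt + 1 \<and> (0 < j \<longrightarrow> t \<le> vec.dim (A \<inter> T))
      \<longrightarrow> real (card (H A)) \<le> c ^ j * N + (\<Sum>i<j. c ^ i)" for j
  proof (induction j)
    case 0
    show ?case
    proof (intro allI impI)
      fix A assume A: "vec.subspace A \<and> vec.dim A + 0 = tt + 1 \<and> (0 < (0::nat) \<longrightarrow> t \<le> vec.dim (A \<inter> T))"
      have "H A \<subseteq> {G. vec.subspace G \<and> vec.dim G = k \<and> A \<subseteq> G}"
        unfolding H_def containing_def using Fsub by auto
      hence "card (H A) \<le> card {G. vec.subspace G \<and> vec.dim G = k \<and> A \<subseteq> G}"
        by (intro card_mono) auto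
      also have "real \<dots> \<le> gauss_binom CARD('a) (CARD('n) - vec.dim A) (k - tt - 1)"
        using A assms(6) unfolding tt_def by (intro count_containing) auto
      also have "\<dots> = N" unfolding N_def using A by simp
      finally show "real (card (H A)) \<le> c ^ 0 * N + (\<Sum>i<0. c ^ i)" by simp
    qed
  next
    case (Suc j)
    define Bj where "Bj = c ^ j * N + (\<Sum>i<j. c ^ i)"
    have Bj0: "Bj \<ge> 0" unfolding Bj_def using c0 N0 by (intro add_nonneg_nonneg sum_nonneg) auto
    show ?case
    proof (intro allI impI)
      fix A assume A: "vec.subspace A \<and> vec.dim A + Suc j = tt + 1 \<and> (0 < Suc j \<longrightarrow> t \<le> vec.dim (A \<inter> T))"
      hence sA: "vec.subspace A" and dA: "vec.dim A + Suc j = tt + 1" and AT: "t \<le> vec.dim (A \<inter> T)" by auto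
      have ssum: "(\<Sum>i<Suc j. c ^ i) = 1 + (\<Sum>i<j. c * c ^ i)"
        by (subst sum.lessThan_Suc_shift) simp
      have goal_eq: "c ^ Suc j * N + (\<Sum>i<Suc j. c ^ i) = c * Bj + 1"
        unfolding Bj_def ssum distrib_left sum_distrib_left by simp
      show "real (card (H A)) \<le> c ^ Suc j * N + (\<Sum>i<Suc j. c ^ i)"
      proof (cases "A = T")
        case True
        have "H A = {}" unfolding H_def containing_def True by auto
        then show ?thesis unfolding goal_eq using c0 Bj0 by simp
      next
        case False
        have "\<exists>F0\<in>\<F>. vec.dim (A \<inter> F0) < t"
        proof (rule ccontr)
          assume "\<not> ?thesis"
          hence cov: "t_cover t \<F> A" unfolding t_cover_def using sA by auto
          hence "tt \<le> vec.dim A" unfolding tt_def tau_def by (intro Least_le) blast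
          hence "vec.dim A = tt" using dA by simp
          hence "A = T" using assms(9) cov unfolding tt_def by blast
          with False show False by simp
        qed
        then obtain F0 where F0: "F0 \<in> \<F>" "vec.dim (A \<inter> F0) < t" by blast
        have sF0: "vec.subspace F0" and dF0: "vec.dim F0 = k" using Fsub[OF F0(1)] by auto
        define d where "d = vec.dim (A \<inter> F0)"
        define Bad where "Bad = {F'\<in>\<F>. vec.dim (F0 \<inter> F') < t}"
        have cBad: "card Bad \<le> 1" using assms(5) F0(1) unfolding almost_t_intersecting_def Bad_def by blast
        define H' where "H' = H A - Bad"
        have "H A \<subseteq> H' \<union> Bad" unfolding H'_def by auto
        hence "card (H A) \<le> card (H' \<union> Bad)" by (intro card_mono) auto
        also have "\<dots> \<le> card H' + card Bad" by (rule card_Un_le)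
        finally have cHA: "real (card (H A)) \<le> real (card H') + 1" using cBad by linarith
        have sAF: "vec.subspace (A \<inter> F0)" using sA sF0 by (rule vec.subspace_inter)
        have cnt: "real (card H') * (Q ^ t - Q ^ d) \<le> real (card (F0 - A)) * Bj"
        proof (rule double_count_bound)
          show "finite H'" "finite (F0 - A)" by auto
        next
          fix G assume G: "G \<in> H'"
          hence GF: "G \<in> \<F>" "A \<subseteq> G" "G \<notin> Bad" unfolding H'_def H_def containing_def by auto
          have sG: "vec.subspace G" using Fsub[OF GF(1)] by auto
          have sGF: "vec.subspace (G \<inter> F0)" using sG sF0 by (rule vec.subspace_inter)
          have dGF: "t \<le> vec.dim (G \<inter> F0)" using GF unfolding Bad_def by (auto simp: Int_commute)
          have eq: "(F0 - A) \<inter> G = (G \<inter> F0) - (A \<inter> F0)" using GF(2) by auto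
          have "real (card ((F0 - A) \<inter> G)) = Q ^ vec.dim (G \<inter> F0) - Q ^ d"
            unfolding eq Q_def d_def using GF(2) by (intro card_Diff_subspace sAF sGF) auto
          moreover have "Q ^ t \<le> Q ^ vec.dim (G \<inter> F0)" using Q2 dGF by (intro power_increasing) auto
          ultimately show "Q ^ t - Q ^ d \<le> real (card ((F0 - A) \<inter> G))" by simp
        next
          fix x assume x: "x \<in> F0 - A"
          define Ax where "Ax = vec.span (insert x A)"
          have sAx: "vec.subspace Ax" unfolding Ax_def by simp
          have dAx: "vec.dim Ax = vec.dim A + 1" unfolding Ax_def using dim_span_insert[OF sA] x by simp
          have AAx: "A \<subseteq> Ax" unfolding Ax_def using vec.span_superset by blast
          have "vec.dim (A \<inter> T) \<le> vec.dim (Ax \<inter> T)" using AAx by (intro vec.dim_subset) auto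
          hence IHc: "vec.subspace Ax \<and> vec.dim Ax + j = tt + 1 \<and> (0 < j \<longrightarrow> t \<le> vec.dim (Ax \<inter> T))"
            using sAx dAx dA AT by simp
          have "{G\<in>H'. x \<in> G} \<subseteq> H Ax"
          proof
            fix G assume "G \<in> {G\<in>H'. x \<in> G}"
            hence G: "G \<in> \<F> - containing \<F> T" "A \<subseteq> G" "x \<in> G"
              unfolding H'_def H_def containing_def by auto
            have "vec.subspace G" using Fsub G(1) by auto
            hence "Ax \<subseteq> G" unfolding Ax_def using G by (intro vec.span_minimal) auto
            then show "G \<in> H Ax" using G(1) unfolding H_def by (simp add: containing_def)
          qed
          hence "card {G\<in>H'. x \<in> G} \<le> card (H Ax)" by (intro card_mono) auto
          also have "real (card (H Ax)) \<le> Bj" unfolding Bj_def using Suc.IH IHc by blast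
          finally show "real (card {G\<in>H'. x \<in> G}) \<le> Bj" by simp
        qed
        have "F0 - A = F0 - (A \<inter> F0)" by auto
        hence cF0: "real (card (F0 - A)) = Q ^ k - Q ^ d"
          using card_Diff_subspace[OF sAF sF0] dF0 unfolding Q_def d_def by auto
        have dt: "d < t" using F0(2) unfolding d_def .
        have tk: "t \<le> k" using assms(2) by simp
        have "Q ^ k - Q ^ d \<le> c * (Q ^ t - Q ^ d)"
          unfolding c_eq using key_ineq[OF Q2 dt tk] .
        hence "real (card H') * (Q ^ t - Q ^ d) \<le> (c * Bj) * (Q ^ t - Q ^ d)"
          using cnt cF0 Bj0 mult_right_mono[of "Q ^ k - Q ^ d" "c * (Q ^ t - Q ^ d)" Bj]
          by (simp add: algebra_simps)
        moreover have "Q ^ d < Q ^ t" using Q2 dt by (intro power_strict_increasing) auto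
        ultimately have "real (card H') \<le> c * Bj" by simp
        then show ?thesis unfolding goal_eq using cHA by linarith
      qed
    qed
  qed
  have X0: "real (card (H A)) \<le> c ^ (tt - vec.dim A + 1) * N + (\<Sum>i<tt - vec.dim A + 1. c ^ i)"
    using main[of "tt - vec.dim A + 1"] assms(10,11,12) unfolding tt_def by auto
  have seq: "{..<tt - vec.dim A + 1} = {0..tt - vec.dim A}" by auto
  have X: "real (card (H A)) \<le> c ^ (tt - vec.dim A + 1) * N + (\<Sum>i=0..tt - vec.dim A. c ^ i)"
    using X0 unfolding seq .
  show ?thesis using X unfolding H_def c_def N_def tt_def .
qed

end
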